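(* Let $R$ be a UFD and $\mathfrak p$ a prime ideal of $R$ such that $R$ is complete with respect to some $\mathfrak p$-filtration of $R$. Let $f\in R[X]$ be $\mathfrak p$-distinguished (of some order) with $f_0\neq0$, and let $\Phi=(\Phi_0,\Phi_1,\dots,\Phi_l)$ be a prime factorization of $f$ in $R[X]$, indexed so that for $i>0$ the constant term $(\Phi_i)_0$ is a unit in $R$ if and only if $i>k$, where $k\ge0$. Let $u$ be the leading coefficient of $\Phi_1\cdots\Phi_k$. Then $(u^{-1},\Phi_1,\dots,\Phi_k)$ is a prime factorization of $P_f$ in $R[X]$. Moreover $U_f\in R[X]$, and $(u\Phi_0,\Phi_{k+1},\Phi_{k+2},\dots,\Phi_l)$ is a prime factorization of $U_f$ in $R[X]$.
   Context: A $\mathfrak p$-filtration is a descending sequence of ideals each containing a power of $\mathfrak p$; $R$ is complete with respect to it if $R\to\varprojlim R/\mathfrak f_i$ is an isomorphism. $f$ is $\mathfrak p$-distinguished of order $n$ if its coefficients $f_i$ lie in $\mathfrak p$ for $i<n$ and $f_n$ is a unit mod $\mathfrak p$; then $f=U_fP_f$ with $P_f\in R[X]$ the unique monic polynomial of degree $n$ with non-leading coefficients in $\mathfrak p$ and $U_f\in R[[X]]$ a unit. A prime factorization of an element $a$ of a ring $S$ is a sequence $(\pi_0,\pi_1,\dots,\pi_k)$ with $a=\pi_0\pi_1\cdots\pi_k$, $\pi_0$ a unit of $S$ and $\pi_i$ prime in $S$ for $i>0$. *)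

theory Defs
  imports "HOL-Computational_Algebra.Computational_Algebra"
begin

definition is_ideal :: "'a::comm_ring_1 set \<Rightarrow> bool" where
  "is_ideal I \<longleftrightarrow> 0 \<in> I \<and> (\<forall>x\<in>I. \<forall>y\<in>I. x + y \<in> I) \<and> (\<forall>x\<in>I. \<forall>r. r * x \<in> I)"

definition prime_ideal :: "'a::comm_ring_1 set \<Rightarrow> bool" where
  "prime_ideal P \<longleftrightarrow> is_ideal P \<and> P \<noteq> UNIV \<and> (\<forall>a b. a * b \<in> P \<longrightarrow> a \<in> P \<or> b \<in> P)"

definition ideal_span :: "'a::comm_ring_1 set \<Rightarrow> 'a set" where
  "ideal_span S = \<Inter>{J. is_ideal J \<and> S \<subseteq> J}"

definition ideal_pow :: "'a::comm_ring_1 set \<Rightarrow> nat \<Rightarrow> 'a set" where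
  "ideal_pow I n = ideal_span {prod_list xs | xs. length xs = n \<and> set xs \<subseteq> I}"

definition p_filtration :: "'a::comm_ring_1 set \<Rightarrow> (nat \<Rightarrow> 'a set) \<Rightarrow> bool" where
  "p_filtration P F \<longleftrightarrow> (\<forall>i. is_ideal (F i) \<and> F (Suc i) \<subseteq> F i \<and> (\<exists>m. ideal_pow P m \<subseteq> F i))"

text \<open>R -> lim R/F_i is bijective: injective (intersection is zero) and every
  compatible family (x_j = x_i mod F_i for j >= i) comes from an element of R.\<close>
definition complete_wrt :: "(nat \<Rightarrow> 'a::comm_ring_1 set) \<Rightarrow> bool" where
  "complete_wrt F \<longleftrightarrow>
     (\<forall>a. (\<forall>i. a \<in> F i) \<longrightarrow> a = 0) \<and>
     (\<forall>x::nat \<Rightarrow> 'a. (\<forall>i j. i \<le> j \<longrightarrow> x j - x i \<in> F i) \<longrightarrow> (\<exists>a. \<forall>i. a - x i \<in> F i))"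

definition unit_mod :: "'a::comm_ring_1 set \<Rightarrow> 'a \<Rightarrow> bool" where
  "unit_mod P a \<longleftrightarrow> (\<exists>b. a * b - 1 \<in> P)"

definition p_distinguished :: "'a::comm_ring_1 set \<Rightarrow> 'a poly \<Rightarrow> nat \<Rightarrow> bool" where
  "p_distinguished P f n \<longleftrightarrow> (\<forall>i<n. coeff f i \<in> P) \<and> unit_mod P (coeff f n)"

definition weierstrass_data :: "'a::comm_ring_1 set \<Rightarrow> 'a poly \<Rightarrow> nat \<Rightarrow> 'a poly \<Rightarrow> 'a fps \<Rightarrow> bool" where
  "weierstrass_data P f n Q U \<longleftrightarrow>
     fps_of_poly f = U * fps_of_poly Q \<and> lead_coeff Q = 1 \<and> degree Q = n \<and>
     (\<forall>i<n. coeff Q i \<in> P) \<and> (\<exists>V. U * V = 1)"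

text \<open>P_f and U_f (unique by the paper's Weierstrass preparation).\<close>
definition WP_P :: "'a::comm_ring_1 set \<Rightarrow> 'a poly \<Rightarrow> nat \<Rightarrow> 'a poly" where
  "WP_P P f n = (THE Q. \<exists>U. weierstrass_data P f n Q U)"

definition WP_U :: "'a::comm_ring_1 set \<Rightarrow> 'a poly \<Rightarrow> nat \<Rightarrow> 'a fps" where
  "WP_U P f n = (THE U. \<exists>Q. weierstrass_data P f n Q U)"

definition is_prime_factorization :: "'b::comm_semiring_1 \<Rightarrow> 'b list \<Rightarrow> bool" where
  "is_prime_factorization a xs \<longleftrightarrow>
     xs \<noteq> [] \<and> hd xs dvd 1 \<and> (\<forall>x\<in>set (tl xs). prime_elem x) \<and> a = prod_list xs"

end

theory Submission
  imports Defs
begin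

lemma is_ideal_span: "is_ideal (ideal_span S)"
  unfolding ideal_span_def is_ideal_def by auto

lemma span_sub: "S \<subseteq> ideal_span S"
  unfolding ideal_span_def by auto

lemma span_least: "is_ideal J \<Longrightarrow> S \<subseteq> J \<Longrightarrow> ideal_span S \<subseteq> J"
  unfolding ideal_span_def by auto

lemma ideal_0: "is_ideal I \<Longrightarrow> 0 \<in> I" unfolding is_ideal_def by auto
lemma ideal_add: "is_ideal I \<Longrightarrow> x \<in> I \<Longrightarrow> y \<in> I \<Longrightarrow> x + y \<in> I" unfolding is_ideal_def by auto
lemma ideal_mult: "is_ideal I \<Longrightarrow> x \<in> I \<Longrightarrow> r * x \<in> I" unfolding is_ideal_def by auto
lemma ideal_mult2: "is_ideal I \<Longrightarrow> x \<in> I \<Longrightarrow> x * r \<in> I"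
  using ideal_mult[of I x r] by (metis mult.commute)
lemma ideal_uminus: "is_ideal I \<Longrightarrow> x \<in> I \<Longrightarrow> - x \<in> I"
  using ideal_mult[of I x "-1"] by (metis mult_minus1)
lemma ideal_diff: "is_ideal I \<Longrightarrow> x \<in> I \<Longrightarrow> y \<in> I \<Longrightarrow> x - y \<in> I"
  using ideal_add[of I x "-y"] ideal_uminus[of I y] by (metis diff_conv_add_uminus)
lemma ideal_sum: "is_ideal I \<Longrightarrow> (\<And>i. i \<in> A \<Longrightarrow> g i \<in> I) \<Longrightarrow> sum g A \<in> I"
proof (induction A rule: infinite_finite_induct)
  case (infinite A) then show ?case using ideal_0 by simp
next
  case empty then show ?case using ideal_0 by simp
next
  case (insert x F) then show ?case using ideal_add[of I "g x" "sum g F"] by simp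
qed

lemma ideal_pow_ideal: "is_ideal (ideal_pow P m)"
  unfolding ideal_pow_def by (rule is_ideal_span)

lemma ideal_pow_gen: "length xs = m \<Longrightarrow> set xs \<subseteq> P \<Longrightarrow> prod_list xs \<in> ideal_pow P m"
proof -
  assume "length xs = m" "set xs \<subseteq> P"
  then have "prod_list xs \<in> {prod_list xs | xs. length xs = m \<and> set xs \<subseteq> P}" by blast
  then show ?thesis unfolding ideal_pow_def using span_sub by (rule subsetD[rotated])
qed

lemma ideal_pow_0: "ideal_pow P 0 = UNIV"
proof -
  have "(1::'a) \<in> ideal_pow P 0" using ideal_pow_gen[of "[]" 0 P] by simp
  then have "r * 1 \<in> ideal_pow P 0" for r :: 'a using ideal_mult[OF ideal_pow_ideal] by blast
  then show ?thesis by (metis UNIV_eq_I mult_1_right)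
qed

lemma ideal_pow_Suc_mult:
  assumes "p \<in> P" "y \<in> ideal_pow P m"
  shows "p * y \<in> ideal_pow P (Suc m)"
proof -
  let ?J = "{y. \<forall>p\<in>P. p * y \<in> ideal_pow P (Suc m)}"
  have J: "is_ideal ?J"
  proof -
    have I: "is_ideal (ideal_pow P (Suc m))" by (rule ideal_pow_ideal)
    show ?thesis unfolding is_ideal_def
    proof (intro conjI ballI allI)
      show "0 \<in> ?J" using ideal_0[OF I] by simp
    next
      fix x y assume "x \<in> ?J" "y \<in> ?J"
      then show "x + y \<in> ?J" using ideal_add[OF I] by (simp add: distrib_left)
    next
      fix x r assume "x \<in> ?J"
      show "r * x \<in> ?J"
      proof (intro CollectI ballI)
        fix p assume "p \<in> P"
        then have "r * (p * x) \<in> ideal_pow P (Suc m)" using \<open>x \<in> ?J\<close> ideal_mult[OF I] by blast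
        moreover have "r * (p * x) = p * (r * x)" by (simp add: algebra_simps)
        ultimately show "p * (r * x) \<in> ideal_pow P (Suc m)" by simp
      qed
    qed
  qed
  have "{prod_list xs | xs. length xs = m \<and> set xs \<subseteq> P} \<subseteq> ?J"
  proof (intro subsetI CollectI ballI)
    fix y p assume "y \<in> {prod_list xs | xs. length xs = m \<and> set xs \<subseteq> P}" "p \<in> P"
    then obtain xs where "y = prod_list xs" "length xs = m" "set xs \<subseteq> P" by blast
    then show "p * y \<in> ideal_pow P (Suc m)"
      using ideal_pow_gen[of "p # xs" "Suc m" P] \<open>p \<in> P\<close> by simp
  qed
  then have "ideal_pow P m \<subseteq> ?J" unfolding ideal_pow_def[of P m] by (rule span_least[OF J])
  then show ?thesis using assms by blast
qed

lemma ideal_pow_Suc_sub: "ideal_pow P (Suc m) \<subseteq> ideal_pow P m"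
proof -
  have "{prod_list xs | xs. length xs = Suc m \<and> set xs \<subseteq> P} \<subseteq> ideal_pow P m"
  proof (intro subsetI)
    fix y assume "y \<in> {prod_list xs | xs. length xs = Suc m \<and> set xs \<subseteq> P}"
    then obtain xs where xs: "y = prod_list xs" "length xs = Suc m" "set xs \<subseteq> P" by blast
    then obtain x ys where "xs = x # ys" "length ys = m" "set ys \<subseteq> P" by (cases xs) auto
    then show "y \<in> ideal_pow P m"
      using ideal_mult[OF ideal_pow_ideal ideal_pow_gen[of ys m P], of x] xs(1) by simp
  qed
  then show ?thesis unfolding ideal_pow_def[of P "Suc m"] by (rule span_least[OF ideal_pow_ideal])
qed

lemma ideal_pow_anti: "m \<le> m' \<Longrightarrow> ideal_pow P m' \<subseteq> ideal_pow P m"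
proof (induction m' rule: dec_induct)
  case base then show ?case by simp
next
  case (step k) then show ?case using ideal_pow_Suc_sub[of P k] by (meson order_trans)
qed

lemma ideal_pow_power: assumes "p \<in> P" shows "p ^ m \<in> ideal_pow P m"
proof -
  have "set (replicate m p) \<subseteq> P" using assms by auto
  then show ?thesis using ideal_pow_gen[of "replicate m p" m P] by (simp add: prod_list_replicate)
qed

lemma filt_ideal: "p_filtration P F \<Longrightarrow> is_ideal (F i)"
  unfolding p_filtration_def by auto

lemma filt_pow: "p_filtration P F \<Longrightarrow> \<exists>m. ideal_pow P m \<subseteq> F i"
  unfolding p_filtration_def by auto

lemma filt_anti: assumes "p_filtration P F" "i \<le> j" shows "F j \<subseteq> F i"
  using assms(2) proof (induction j rule: dec_induct)
  case base then show ?case by simp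
next
  case (step k)
  have "F (Suc k) \<subseteq> F k" using \<open>p_filtration P F\<close> unfolding p_filtration_def by blast
  then show ?case using step(3) by (rule order_trans)
qed

lemma telescope:
  assumes "\<And>m. x (Suc m) - x m \<in> ideal_pow P m"
  shows "m \<le> m' \<Longrightarrow> x m' - x m \<in> ideal_pow P (m::nat)"
proof (induction m' rule: dec_induct)
  case base then show ?case using ideal_0[OF ideal_pow_ideal] by simp
next
  case (step m')
  have "x (Suc m') - x m = (x (Suc m') - x m') + (x m' - x m)" by simp
  moreover have "x (Suc m') - x m' \<in> ideal_pow P m"
    using assms[of m'] ideal_pow_anti[OF step(1)] by blast
  ultimately show ?case using ideal_add[OF ideal_pow_ideal, of "x (Suc m') - x m'" P m "x m' - x m"] step(3) by simp
qed

lemma complete_lim: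
  fixes x :: "nat \<Rightarrow> 'a::comm_ring_1"
  assumes PF: "p_filtration P F" and C: "complete_wrt F"
    and D: "\<And>m. x (Suc m) - x m \<in> ideal_pow P m"
  shows "\<exists>a. \<forall>i m. ideal_pow P m \<subseteq> F i \<longrightarrow> a - x m \<in> F i"
proof -
  define M where "M i = (SOME m. ideal_pow P m \<subseteq> F i)" for i
  have M: "ideal_pow P (M i) \<subseteq> F i" for i
    unfolding M_def by (rule someI_ex[of "\<lambda>m. ideal_pow P m \<subseteq> F i"]) (rule filt_pow[OF PF])
  define N where "N i = (\<Sum>t\<le>i. M t)" for i
  have NM: "M i \<le> N i" for i unfolding N_def by (rule member_le_sum) auto
  have Nmono: "i \<le> j \<Longrightarrow> N i \<le> N j" for i j
    unfolding N_def by (rule sum_mono2) auto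
  have NF: "ideal_pow P (N i) \<subseteq> F i" for i using ideal_pow_anti[OF NM[of i]] M[of i] by (rule order_trans)
  have cmp: "\<forall>i j. i \<le> j \<longrightarrow> x (N j) - x (N i) \<in> F i"
  proof (intro allI impI)
    fix i j :: nat assume "i \<le> j"
    then have "x (N j) - x (N i) \<in> ideal_pow P (N i)" by (rule telescope[OF D Nmono])
    then show "x (N j) - x (N i) \<in> F i" using NF[of i] by (rule subsetD[rotated])
  qed
  have comp: "\<forall>y::nat\<Rightarrow>'a. (\<forall>i j. i \<le> j \<longrightarrow> y j - y i \<in> F i) \<longrightarrow> (\<exists>a. \<forall>i. a - y i \<in> F i)"
    using C unfolding complete_wrt_def by (rule conjunct2)
  have "\<exists>a. \<forall>i. a - x (N i) \<in> F i" using comp[rule_format, OF cmp[rule_format]] .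
  then obtain a where a: "\<And>i. a - x (N i) \<in> F i" by blast
  show ?thesis
  proof (intro exI allI impI)
    fix i m assume im: "ideal_pow P m \<subseteq> F i"
    have xx: "x (N i) - x m \<in> F i"
    proof (cases "m \<le> N i")
      case True show ?thesis using im telescope[OF D True] by (rule subsetD)
    next
      case False
      then have "x m - x (N i) \<in> ideal_pow P (N i)" by (intro telescope[OF D]) simp
      then have "x m - x (N i) \<in> F i" using NF[of i] by (rule subsetD[rotated])
      then have "- (x m - x (N i)) \<in> F i" by (rule ideal_uminus[OF filt_ideal[OF PF]])
      then show ?thesis by simp
    qed
    have "(a - x (N i)) + (x (N i) - x m) \<in> F i"
      by (rule ideal_add[OF filt_ideal[OF PF] a xx])
    then show "a - x m \<in> F i" by simp
  qed
qed

lemma complete_zero: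
  "complete_wrt F \<Longrightarrow> (\<And>i. a \<in> F i) \<Longrightarrow> a = 0"
  unfolding complete_wrt_def by (drule conjunct1) (erule allE[of _ a], simp)

lemma one_plus_P_unit:
  fixes p :: "'a::comm_ring_1"
  assumes PF: "p_filtration P F" and C: "complete_wrt F" and PI: "is_ideal P" and p: "p \<in> P"
  shows "(1 + p) dvd 1"
proof -
  have mp: "-p \<in> P" by (rule ideal_uminus[OF PI p])
  define x where "x m = (\<Sum>t<m. (-p)^t)" for m
  have "x (Suc m) - x m \<in> ideal_pow P m" for m
  proof -
    have "x (Suc m) - x m = (-p)^m" unfolding x_def by simp
    then show ?thesis using ideal_pow_power[OF mp, of m] by simp
  qed
  then obtain a where a: "\<And>i m. ideal_pow P m \<subseteq> F i \<Longrightarrow> a - x m \<in> F i"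
    using complete_lim[OF PF C] by blast
  have "a * (1 + p) - 1 = 0"
  proof (rule complete_zero[OF C])
    fix i
    obtain m where m: "ideal_pow P m \<subseteq> F i" using filt_pow[OF PF] by blast
    have geo: "(1 - (-p)) * x m = 1 - (-p)^m" unfolding x_def by (rule one_diff_power_eq[symmetric])
    then have geo': "x m * (1 + p) = 1 - (-p)^m" by (simp add: mult.commute)
    have eq: "a * (1 + p) - 1 = (a - x m) * (1 + p) + (- ((-p)^m))"
      unfolding left_diff_distrib geo' by simp
    have "(a - x m) * (1 + p) \<in> F i" using a[OF m] by (rule ideal_mult2[OF filt_ideal[OF PF]])
    moreover have "- ((-p)^m) \<in> F i"
      using m ideal_uminus[OF ideal_pow_ideal ideal_pow_power[OF mp]] by (rule subsetD)
    ultimately have "(a - x m) * (1 + p) + (- ((-p)^m)) \<in> F i" by (rule ideal_add[OF filt_ideal[OF PF]])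
    then show "a * (1 + p) - 1 \<in> F i" unfolding eq .
  qed
  then have "1 = (1 + p) * a" by (simp add: algebra_simps)
  then show ?thesis by (rule dvdI)
qed

definition inI :: "'a set \<Rightarrow> 'a fps \<Rightarrow> bool" where
  "inI I W \<longleftrightarrow> (\<forall>j. W $ j \<in> I)"

lemma inI_mult_left:
  fixes W :: "'a::comm_ring_1 fps"
  assumes "is_ideal I" "inI I W" shows "inI I (Y * W)"
  unfolding inI_def fps_mult_nth
proof
  fix j show "(\<Sum>i = 0..j. Y $ i * W $ (j - i)) \<in> I"
    using assms unfolding inI_def by (intro ideal_sum ideal_mult) auto
qed

lemma inI_mult_right:
  fixes W :: "'a::comm_ring_1 fps"
  assumes "is_ideal I" "inI I W" shows "inI I (W * Y)"
  using inI_mult_left[OF assms, of Y] by (simp add: mult.commute)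

lemma inI_shift: "inI I W \<Longrightarrow> inI I (fps_shift n W)"
  unfolding inI_def by simp

lemma inI_add: "is_ideal I \<Longrightarrow> inI I V \<Longrightarrow> inI I W \<Longrightarrow> inI I (V + W)"
  unfolding inI_def by (simp add: ideal_add)

lemma inI_uminus: "is_ideal I \<Longrightarrow> inI I W \<Longrightarrow> inI I (- W)"
  unfolding inI_def by (simp add: ideal_uminus)

lemma inI_sub: "I \<subseteq> J \<Longrightarrow> inI I W \<Longrightarrow> inI J W"
  unfolding inI_def by blast

lemma inI_L:
  fixes W :: "'a::comm_ring_1 fps"
  assumes "inI P L" "inI (ideal_pow P m) W" shows "inI (ideal_pow P (Suc m)) (L * W)"
  unfolding inI_def fps_mult_nth
proof
  fix j show "(\<Sum>i = 0..j. L $ i * W $ (j - i)) \<in> ideal_pow P (Suc m)"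
    using assms unfolding inI_def by (intro ideal_sum[OF ideal_pow_ideal] ideal_pow_Suc_mult) auto
qed

lemma fps_unit:
  fixes G :: "'a::comm_ring_1 fps"
  assumes "G $ 0 dvd 1" shows "\<exists>Gi. G * Gi = 1"
proof -
  from assms obtain y where "1 = G $ 0 * y" by (rule dvdE)
  then have "G * fps_right_inverse G y = 1" by (intro fps_right_inverse) simp
  then show ?thesis by blast
qed

lemma kill:
  fixes Q :: "'a::comm_ring_1 poly" and W :: "'a fps"
  assumes PF: "p_filtration P F" and C: "complete_wrt F" and PI: "is_ideal P"
    and Q: "lead_coeff Q = 1" "degree Q = n" "\<forall>i<n. coeff Q i \<in> P"
    and Z: "\<forall>j\<ge>n. (W * fps_of_poly Q) $ j = 0"
  shows "W = 0"
proof -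
  define Lq where "Lq = fps_of_poly Q - fps_X ^ n"
  have Lq: "inI P Lq" unfolding inI_def
  proof
    fix j
    show "Lq $ j \<in> P"
    proof (cases "j < n")
      case True then show ?thesis using Q by (simp add: Lq_def)
    next
      case False
      show ?thesis
      proof (cases "j = n")
        case True then show ?thesis using Q ideal_0[OF PI] by (simp add: Lq_def)
      next
        case False
        then have "j > degree Q" using \<open>\<not> j < n\<close> Q by simp
        then show ?thesis using False ideal_0[OF PI] by (simp add: Lq_def coeff_eq_0)
      qed
    qed
  qed
  have dec: "W * fps_of_poly Q = fps_X ^ n * W + Lq * W"
    by (simp add: Lq_def algebra_simps)
  have all: "inI (ideal_pow P m) W" for m
  proof (induction m)
    case 0 then show ?case by (simp add: inI_def ideal_pow_0)
  next
    case (Suc m)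
    have LW: "inI (ideal_pow P (Suc m)) (Lq * W)" by (rule inI_L[OF Lq Suc])
    show ?case unfolding inI_def
    proof
      fix j
      have "(W * fps_of_poly Q) $ (j + n) = 0" using Z by simp
      then have "W $ j + (Lq * W) $ (j + n) = 0" unfolding dec
        by (simp add: fps_X_power_mult_nth)
      then have "W $ j = - ((Lq * W) $ (j + n))" by (simp add: eq_neg_iff_add_eq_0)
      moreover have "- ((Lq * W) $ (j + n)) \<in> ideal_pow P (Suc m)"
        using LW unfolding inI_def by (intro ideal_uminus[OF ideal_pow_ideal]) simp
      ultimately show "W $ j \<in> ideal_pow P (Suc m)" by simp
    qed
  qed
  show ?thesis
  proof (rule fps_ext)
    fix j
    show "W $ j = 0 $ j"
    proof -
      have "W $ j = 0"
      proof (rule complete_zero[OF C])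
        fix i
        obtain m where m: "ideal_pow P m \<subseteq> F i" using filt_pow[OF PF] by blast
        show "W $ j \<in> F i" using m all[of m] unfolding inI_def by blast
      qed
      then show ?thesis by simp
    qed
  qed
qed

lemma WD_unique:
  fixes f :: "'a::idom poly"
  assumes PF: "p_filtration P F" and C: "complete_wrt F" and PI: "is_ideal P"
    and A: "weierstrass_data P f n Q U" and B: "weierstrass_data P f n Q' U'"
  shows "Q' = Q \<and> U' = U"
proof -
  from B obtain V' where V': "U' * V' = 1" unfolding weierstrass_data_def by blast
  have e: "U * fps_of_poly Q = U' * fps_of_poly Q'"
    using A B unfolding weierstrass_data_def by simp
  define W where "W = V' * U - 1"
  have WQ: "W * fps_of_poly Q = fps_of_poly (Q' - Q)"
  proof -
    have "V' * U * fps_of_poly Q = V' * U' * fps_of_poly Q'" using e by (simp add: mult.assoc)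
    also have "\<dots> = fps_of_poly Q'" using V' by (simp add: mult.commute)
    finally show ?thesis unfolding W_def by (simp add: algebra_simps fps_of_poly_diff)
  qed
  have "W = 0"
  proof (rule kill[OF PF C PI])
    show "lead_coeff Q = 1" "degree Q = n" "\<forall>i<n. coeff Q i \<in> P"
      using A unfolding weierstrass_data_def by auto
    show "\<forall>j\<ge>n. (W * fps_of_poly Q) $ j = 0"
    proof (intro allI impI)
      fix j assume "n \<le> j"
      have dQ: "degree Q = n" "lead_coeff Q = 1" "degree Q' = n" "lead_coeff Q' = 1"
        using A B unfolding weierstrass_data_def by auto
      show "(W * fps_of_poly Q) $ j = 0"
      proof (cases "j = n")
        case True then show ?thesis using dQ by (simp add: WQ)
      next
        case False
        then have "j > n" using \<open>n \<le> j\<close> by simp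
        then show ?thesis using dQ by (simp add: WQ coeff_eq_0)
      qed
    qed
  qed
  then have "fps_of_poly (Q' - Q) = 0" using WQ by simp
  then have QQ: "Q' = Q" by (simp add: fps_of_poly_diff)
  have "fps_of_poly Q \<noteq> 0" using A unfolding weierstrass_data_def
    by (metis fps_of_poly_0 fps_of_poly_eq_iff leading_coeff_0_iff zero_neq_one)
  then have "U' = U" using e QQ by simp
  then show ?thesis using QQ by simp
qed

lemma fps_shift_diff': "fps_shift n (A - B) = fps_shift n A - fps_shift n (B :: 'a::ab_group_add fps)"
  by (rule fps_ext) simp

lemma WD_exists:
  fixes f :: "'a::comm_ring_1 poly"
  assumes PF: "p_filtration P F" and C: "complete_wrt F" and PI: "is_ideal P"
    and D: "p_distinguished P f n"
  shows "\<exists>Q U. weierstrass_data P f n Q U"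
proof -
  define Ff where "Ff = fps_of_poly f"
  define L where "L = Abs_fps (\<lambda>j. if j < n then coeff f j else 0)"
  define H where "H = fps_shift n Ff"
  have LP: "inI P L" unfolding inI_def L_def using D ideal_0[OF PI]
    by (auto simp: p_distinguished_def)
  have Fdec: "Ff = L + fps_X ^ n * H"
    by (rule fps_ext) (simp add: L_def H_def Ff_def fps_X_power_mult_nth)
  have unitP: "x \<in> P \<Longrightarrow> (1 + x) dvd 1" for x by (rule one_plus_P_unit[OF PF C PI])
  have H0: "H $ 0 dvd 1"
  proof -
    obtain b where b: "coeff f n * b - 1 \<in> P" using D unfolding p_distinguished_def unit_mod_def by blast
    have "(1 + (coeff f n * b - 1)) dvd 1" by (rule unitP[OF b])
    then have "coeff f n * b dvd 1" by simp
    then have "coeff f n dvd 1" by (rule dvd_mult_left)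
    then show ?thesis by (simp add: H_def Ff_def)
  qed
  obtain Hi where Hi: "H * Hi = 1" using fps_unit[OF H0] by blast
  define T where "T V = Hi * (1 - fps_shift n (L * V))" for V
  have Tdiff: "T V - T V' = - (Hi * fps_shift n (L * (V - V')))" for V V'
    unfolding T_def by (simp add: algebra_simps fps_shift_diff')
  have Tcontr: "inI (ideal_pow P (Suc m)) (T V - T V')" if "inI (ideal_pow P m) (V - V')" for m V V'
    unfolding Tdiff
    by (intro inI_uminus[OF ideal_pow_ideal] inI_mult_left[OF ideal_pow_ideal] inI_shift inI_L[OF LP that])
  have TF: "inI (F i) (T V - T V')" if "inI (F i) (V - V')" for i V V'
    unfolding Tdiff
    by (intro inI_uminus[OF filt_ideal[OF PF]] inI_mult_left[OF filt_ideal[OF PF]] inI_shift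
        inI_mult_left[OF filt_ideal[OF PF] that])
  define sq where "sq m = (T ^^ m) 0" for m
  have sqS: "sq (Suc m) = T (sq m)" for m by (simp add: sq_def)
  have sqd: "inI (ideal_pow P m) (sq (Suc m) - sq m)" for m
  proof (induction m)
    case 0 then show ?case by (simp add: inI_def ideal_pow_0)
  next
    case (Suc m)
    show ?case unfolding sqS[of "Suc m"] sqS[of m] using Tcontr[OF Suc[unfolded sqS[of m]]] .
  qed
  define lim where "lim j = (SOME a. \<forall>i m. ideal_pow P m \<subseteq> F i \<longrightarrow> a - sq m $ j \<in> F i)" for j
  have limP: "\<forall>i m. ideal_pow P m \<subseteq> F i \<longrightarrow> lim j - sq m $ j \<in> F i" for j
  proof -
    have "\<exists>a. \<forall>i m. ideal_pow P m \<subseteq> F i \<longrightarrow> a - sq m $ j \<in> F i"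
    proof (rule complete_lim[OF PF C])
      fix m show "sq (Suc m) $ j - sq m $ j \<in> ideal_pow P m" using sqd[of m] unfolding inI_def by simp
    qed
    then show ?thesis unfolding lim_def by (rule someI_ex)
  qed
  define V where "V = Abs_fps lim"
  have Vlim: "inI (F i) (V - sq m)" if "ideal_pow P m \<subseteq> F i" for i m
    unfolding inI_def V_def using limP that by simp
  have Tfix: "T V = V"
  proof (rule fps_ext)
    fix j
    have "(T V - V) $ j = 0"
    proof (rule complete_zero[OF C])
      fix i
      obtain m where m: "ideal_pow P m \<subseteq> F i" using filt_pow[OF PF] by blast
      have m': "ideal_pow P (Suc m) \<subseteq> F i" using ideal_pow_Suc_sub m by blast
      have a: "inI (F i) (T V - T (sq m))" by (rule TF[OF Vlim[OF m]])
      have b: "inI (F i) (- (V - sq (Suc m)))" by (rule inI_uminus[OF filt_ideal[OF PF] Vlim[OF m']])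
      have "T V - V = (T V - T (sq m)) + (- (V - sq (Suc m)))" by (simp add: sqS)
      then have "inI (F i) (T V - V)" using inI_add[OF filt_ideal[OF PF] a b] by simp
      then show "(T V - V) $ j \<in> F i" unfolding inI_def by blast
    qed
    then show "T V $ j = V $ j" by simp
  qed
  have HV: "H * V = 1 - fps_shift n (L * V)"
  proof -
    have "H * V = H * T V" using Tfix by simp
    also have "\<dots> = (H * Hi) * (1 - fps_shift n (L * V))" unfolding T_def by (simp add: mult.assoc)
    finally show ?thesis using Hi by simp
  qed
  define Q where "Q = Ff * V"
  have Qdec: "Q = L * V + fps_X ^ n * (H * V)" unfolding Q_def Fdec by (simp add: distrib_right mult.assoc)
  have LVP: "inI P (L * V)" by (rule inI_mult_right[OF PI LP])
  have Qlow: "j < n \<Longrightarrow> Q $ j \<in> P" for j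
  proof -
    assume j: "j < n"
    have "Q $ j = (L * V) $ j" unfolding Qdec by (simp add: fps_X_power_mult_nth j)
    then show ?thesis using LVP unfolding inI_def by simp
  qed
  have Qhigh: "n \<le> j \<Longrightarrow> Q $ j = (if j = n then 1 else 0)" for j
  proof -
    assume j: "n \<le> j"
    have "Q $ j = (L * V) $ j + (fps_X ^ n * (H * V)) $ j"
      unfolding Qdec by simp
    also have "\<dots> = (L * V) $ j + (1 - fps_shift n (L * V)) $ (j - n)"
      unfolding HV using j by (simp add: fps_X_power_mult_nth)
    also have "\<dots> = (if j = n then 1 else 0)" using j by simp
    finally show ?thesis .
  qed
  define Qp where "Qp = monom 1 n + (\<Sum>j<n. monom (Q $ j) j)"
  have cQp: "coeff Qp j = (if j = n then 1 else 0) + (if j < n then Q $ j else 0)" for j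
  proof -
    have "(\<Sum>i<n. coeff (monom (Q $ i) i) j) = (\<Sum>i<n. if i = j then Q $ i else 0)"
      by (intro sum.cong) (auto simp: coeff_monom)
    also have "\<dots> = (if j < n then Q $ j else 0)" by (simp add: sum.delta)
    finally show ?thesis unfolding Qp_def by (simp add: coeff_sum coeff_monom)
  qed
  have QpQ: "fps_of_poly Qp = Q"
  proof (rule fps_ext)
    fix j show "fps_of_poly Qp $ j = Q $ j"
      using Qhigh[of j] by (cases "j < n") (auto simp: cQp)
  qed
  have cn: "coeff Qp n = 1" by (simp add: cQp)
  have dQp: "degree Qp = n"
  proof (rule antisym)
    show "degree Qp \<le> n" by (rule degree_le) (simp add: cQp)
    show "n \<le> degree Qp" by (rule le_degree) (simp add: cn)
  qed
  have V0: "V $ 0 dvd 1"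
  proof -
    have "V $ 0 = T V $ 0" using Tfix by simp
    also have "\<dots> = Hi $ 0 * (1 + (- (L * V) $ n))" by (simp add: T_def)
    finally have e: "V $ 0 = Hi $ 0 * (1 + (- (L * V) $ n))" .
    have "H $ 0 * Hi $ 0 = 1" using arg_cong[OF Hi, of "\<lambda>x. x $ 0"] by simp
    then have "Hi $ 0 dvd 1" by (metis dvd_triv_right)
    moreover have "(1 + (- (L * V) $ n)) dvd 1"
      by (rule unitP) (use LVP ideal_uminus[OF PI] in \<open>auto simp: inI_def\<close>)
    ultimately have "Hi $ 0 * (1 + (- (L * V) $ n)) dvd 1 * 1" by (rule mult_dvd_mono)
    then show ?thesis unfolding e by simp
  qed
  obtain Vi where Vi: "V * Vi = 1" using fps_unit[OF V0] by blast
  have "weierstrass_data P f n Qp Vi"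
    unfolding weierstrass_data_def
  proof (intro conjI)
    show "fps_of_poly f = Vi * fps_of_poly Qp"
    proof -
      have "Vi * fps_of_poly Qp = Ff * (V * Vi)" unfolding QpQ Q_def by (simp add: algebra_simps)
      then show ?thesis using Vi by (simp add: Ff_def)
    qed
    show "lead_coeff Qp = 1" using dQp cn by simp
    show "degree Qp = n" by (rule dQp)
    show "\<forall>i<n. coeff Qp i \<in> P" using Qlow by (simp add: cQp)
    show "\<exists>V. Vi * V = 1" using Vi by (auto simp: mult.commute)
  qed
  then show ?thesis by blast
qed

lemma prod_coeff0_unit:
  fixes xs :: "'a::comm_ring_1 poly list"
  shows "(\<forall>x\<in>set xs. coeff x 0 dvd 1) \<Longrightarrow> coeff (prod_list xs) 0 dvd 1"
proof (induction xs)
  case Nil then show ?case by simp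
next
  case (Cons x xs)
  then have "coeff x 0 * coeff (prod_list xs) 0 dvd 1 * 1" by (intro mult_dvd_mono) auto
  then show ?case by (simp add: coeff_mult_0)
qed

lemma unit_div_primes:
  fixes ps :: "'a::idom poly list"
  assumes "\<forall>p\<in>set ps. prime_elem p \<and> \<not> coeff p 0 dvd 1"
  shows "prod_list ps = q * s \<Longrightarrow> coeff q 0 dvd 1 \<Longrightarrow> q dvd 1"
  using assms
proof (induction ps arbitrary: s)
  case Nil
  then have "1 = q * s" by simp
  then show ?case by (rule dvdI)
next
  case (Cons p ps)
  have pp: "prime_elem p" "\<not> coeff p 0 dvd 1" using Cons.prems(3) by auto
  have "p dvd q * s" using Cons.prems(1) by (metis dvdI prod_list.Cons)
  then have "p dvd q \<or> p dvd s" using prime_elem_dvd_mult_iff[OF pp(1)] by blast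
  then show ?case
  proof
    assume "p dvd q"
    then obtain t where "q = p * t" by (rule dvdE)
    then have "coeff q 0 = coeff p 0 * coeff t 0" by (simp add: coeff_mult_0)
    then have "coeff p 0 dvd 1" using Cons.prems(2) by (metis dvd_triv_left dvd_trans)
    then show ?thesis using pp by blast
  next
    assume "p dvd s"
    then obtain s' where s': "s = p * s'" by (rule dvdE)
    have "p \<noteq> 0" using pp(1) by (rule prime_elem_not_zeroI)
    have "p * prod_list ps = p * (q * s')" using Cons.prems(1) s' by (simp add: algebra_simps)
    then have ps: "prod_list ps = q * s'" using \<open>p \<noteq> 0\<close> by simp
    have "\<forall>p\<in>set ps. prime_elem p \<and> \<not> coeff p 0 dvd 1" using Cons.prems(3) by simp
    then show ?thesis by (rule Cons.IH[OF ps Cons.prems(2)])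
  qed
qed

theorem proposition5p3:
  fixes P :: "'a::{factorial_semiring,idom} set"
    and F :: "nat \<Rightarrow> 'a set"
    and f :: "'a poly"
    and n :: nat
    and \<Phi> :: "'a poly list"
    and l k :: nat
    and u :: 'a
  assumes "prime_ideal P"
    and "p_filtration P F"
    and "complete_wrt F"
    and "p_distinguished P f n"
    and "coeff f 0 \<noteq> 0"
    and "is_prime_factorization f \<Phi>"
    and "length \<Phi> = Suc l"
    and "k \<le> l"
    and "\<forall>i. 0 < i \<and> i \<le> l \<longrightarrow> (is_unit (coeff (\<Phi> ! i) 0) \<longleftrightarrow> k < i)"
    and "u = lead_coeff (prod_list (take k (tl \<Phi>)))"
  shows "is_unit u \<and>
         is_prime_factorization (WP_P P f n) ([:1 div u:] # take k (tl \<Phi>)) \<and>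
         (\<exists>g. WP_U P f n = fps_of_poly g \<and>
              is_prime_factorization g (smult u (\<Phi> ! 0) # drop (Suc k) \<Phi>))"
proof -
  note PF = assms(2) and C = assms(3)
  have PI: "is_ideal P" using assms(1) unfolding prime_ideal_def by blast
  obtain Q0 U0 where wd: "weierstrass_data P f n Q0 U0"
    using WD_exists[OF PF C PI assms(4)] by blast
  have WPP: "WP_P P f n = Q0"
    unfolding WP_P_def
  proof (rule the_equality)
    show "\<exists>U. weierstrass_data P f n Q0 U" using wd by blast
    fix Q assume "\<exists>U. weierstrass_data P f n Q U"
    then obtain U where "weierstrass_data P f n Q U" by blast
    then show "Q = Q0" using WD_unique[OF PF C PI wd] by blast
  qed
  have WPU: "WP_U P f n = U0"
    unfolding WP_U_def
  proof (rule the_equality)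
    show "\<exists>Q. weierstrass_data P f n Q U0" using wd by blast
    fix U assume "\<exists>Q. weierstrass_data P f n Q U"
    then obtain Q where "weierstrass_data P f n Q U" by blast
    then show "U = U0" using WD_unique[OF PF C PI wd] by blast
  qed
  have Q0: "lead_coeff Q0 = 1" "degree Q0 = n" "\<forall>i<n. coeff Q0 i \<in> P"
    "fps_of_poly f = U0 * fps_of_poly Q0" "\<exists>V. U0 * V = 1"
    using wd unfolding weierstrass_data_def by auto
  have Q0nz: "Q0 \<noteq> 0" using Q0(1) by auto
  have pf: "\<Phi> \<noteq> []" "hd \<Phi> dvd 1" "\<forall>x\<in>set (tl \<Phi>). prime_elem x" "f = prod_list \<Phi>"
    using assms(6) unfolding is_prime_factorization_def by auto
  define \<Phi>0 where "\<Phi>0 = hd \<Phi>"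
  define A where "A = prod_list (take k (tl \<Phi>))"
  define Bt where "Bt = prod_list (drop k (tl \<Phi>))"
  define B where "B = \<Phi>0 * Bt"
  have Phi: "\<Phi> = \<Phi>0 # tl \<Phi>" using pf(1) unfolding \<Phi>0_def by simp
  have Phi0: "\<Phi> ! 0 = \<Phi>0" using pf(1) unfolding \<Phi>0_def by (simp add: hd_conv_nth)
  have fAB: "f = A * B"
  proof -
    have "f = \<Phi>0 * prod_list (tl \<Phi>)" using pf(4) pf(1) unfolding \<Phi>0_def by (cases \<Phi>) auto
    also have "prod_list (tl \<Phi>) = A * Bt"
      unfolding A_def Bt_def prod_list.append[symmetric] by simp
    finally show ?thesis unfolding B_def by (simp add: algebra_simps)
  qed
  have ltl: "length (tl \<Phi>) = l" using assms(7) by simp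
  have takeP: "prime_elem p \<and> \<not> coeff p 0 dvd 1" if pin: "p \<in> set (take k (tl \<Phi>))" for p
  proof -
    obtain j where j: "j < length (take k (tl \<Phi>))" "p = take k (tl \<Phi>) ! j"
      using pin unfolding in_set_conv_nth by blast
    have jk: "j < k" "j < l" using j(1) ltl by auto
    have pj: "p = \<Phi> ! Suc j" using j jk ltl by (simp add: nth_tl)
    have "\<not> is_unit (coeff (\<Phi> ! Suc j) 0)" using assms(9) jk assms(8) by auto
    moreover have "p \<in> set (tl \<Phi>)" using pin by (rule in_set_takeD)
    ultimately show ?thesis using pf(3) pj by auto
  qed
  have dropU: "prime_elem p \<and> coeff p 0 dvd 1" if pin: "p \<in> set (drop k (tl \<Phi>))" for p
  proof -
    obtain j where j: "j < length (drop k (tl \<Phi>))" "p = drop k (tl \<Phi>) ! j"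
      using pin unfolding in_set_conv_nth by blast
    have jk: "k + j < l" using j(1) ltl by auto
    have pj: "p = \<Phi> ! Suc (k + j)" using j jk ltl by (simp add: nth_tl)
    have "is_unit (coeff (\<Phi> ! Suc (k + j)) 0)" using assms(9) jk by auto
    moreover have "p \<in> set (tl \<Phi>)" using pin by (rule in_set_dropD)
    ultimately show ?thesis using pf(3) pj by auto
  qed
  have Phi0u: "coeff \<Phi>0 0 dvd 1"
  proof -
    obtain g where "1 = \<Phi>0 * g" using pf(2) unfolding \<Phi>0_def by (rule dvdE)
    then have "coeff 1 0 = coeff (\<Phi>0 * g) 0" by simp
    then have "1 = coeff \<Phi>0 0 * coeff g 0" by (simp add: coeff_mult_0)
    then show ?thesis by (rule dvdI)
  qed
  have B0: "coeff B 0 dvd 1"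
  proof -
    have "coeff Bt 0 dvd 1" unfolding Bt_def by (rule prod_coeff0_unit) (use dropU in blast)
    then have "coeff \<Phi>0 0 * coeff Bt 0 dvd 1 * 1" using Phi0u by (intro mult_dvd_mono)
    then show ?thesis by (simp add: B_def coeff_mult_0)
  qed
  obtain Bi where Bi: "fps_of_poly B * Bi = 1" using fps_unit[of "fps_of_poly B"] B0 by auto
  obtain V0 where V0: "U0 * V0 = 1" using Q0(5) by blast
  have fA: "fps_of_poly A = Bi * U0 * fps_of_poly Q0"
  proof -
    have "fps_of_poly A = fps_of_poly A * (fps_of_poly B * Bi)" using Bi by simp
    also have "\<dots> = fps_of_poly f * Bi" using fAB by (simp add: fps_of_poly_mult mult.assoc)
    also have "\<dots> = Bi * U0 * fps_of_poly Q0" using Q0(4) by (simp add: algebra_simps)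
    finally show ?thesis .
  qed
  obtain q r where qr: "pseudo_divmod A Q0 = (q, r)" by (cases "pseudo_divmod A Q0") auto
  have Aqr: "A = Q0 * q + r" using pseudo_divmod(1)[OF Q0nz qr] Q0(1) by simp
  have rdeg: "r = 0 \<or> degree r < n" using pseudo_divmod(2)[OF Q0nz qr] Q0(2) by simp
  define W where "W = Bi * U0 - fps_of_poly q"
  have WQ: "W * fps_of_poly Q0 = fps_of_poly r"
  proof -
    have "fps_of_poly r = fps_of_poly A - fps_of_poly q * fps_of_poly Q0"
      using Aqr by (simp add: fps_of_poly_add fps_of_poly_mult)
    then show ?thesis unfolding W_def fA by (simp add: algebra_simps)
  qed
  have "W = 0"
  proof (rule kill[OF PF C PI Q0(1) Q0(2) Q0(3)])
    show "\<forall>j\<ge>n. (W * fps_of_poly Q0) $ j = 0"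
      using rdeg unfolding WQ by (auto simp: coeff_eq_0)
  qed
  then have r0: "r = 0" and qB: "fps_of_poly q = Bi * U0"
    using WQ unfolding W_def by (auto simp: fps_of_poly_eq_iff[of r 0, simplified])
  have AQ: "A = q * Q0" using Aqr r0 by (simp add: mult.commute)
  have q0: "coeff q 0 dvd 1"
  proof -
    have "fps_of_poly q * (fps_of_poly B * V0) = (fps_of_poly B * Bi) * (U0 * V0)"
      unfolding qB by (simp add: algebra_simps)
    then have "fps_of_poly q * (fps_of_poly B * V0) = 1" using Bi V0 by simp
    then have "(fps_of_poly q * (fps_of_poly B * V0)) $ 0 = 1 $ 0" by simp
    then have "1 = coeff q 0 * (fps_of_poly B * V0) $ 0" by simp
    then show ?thesis by (rule dvdI)
  qed
  have qu: "q dvd 1"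
    by (rule unit_div_primes[of "take k (tl \<Phi>)" q Q0]) (use takeP AQ q0 in \<open>auto simp: A_def\<close>)
  then obtain c where c: "q = [:c:]" "c dvd 1" by (auto simp: is_unit_poly_iff)
  have AQc: "A = smult c Q0" using AQ c by simp
  have uc: "u = c" using assms(10) AQc Q0(1) unfolding A_def[symmetric] by (simp add: lead_coeff_smult)
  have uu: "is_unit u" using uc c by simp
  have inv: "1 div u * u = 1" using uu by simp
  have Q0A: "Q0 = [:1 div u:] * A"
    using AQc uc inv by (simp add: mult.commute)
  have part2: "is_prime_factorization (WP_P P f n) ([:1 div u:] # take k (tl \<Phi>))"
    unfolding is_prime_factorization_def WPP
  proof (intro conjI)
    show "[:1 div u:] # take k (tl \<Phi>) \<noteq> []" by simp
    have "1 div u dvd 1" using inv by (metis dvdI mult.commute)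
    then show "hd ([:1 div u:] # take k (tl \<Phi>)) dvd 1" by (simp add: is_unit_const_poly_iff)
    show "\<forall>x\<in>set (tl ([:1 div u:] # take k (tl \<Phi>))). prime_elem x" using takeP by auto
    show "Q0 = prod_list ([:1 div u:] # take k (tl \<Phi>))" using Q0A by (simp add: A_def)
  qed
  define g where "g = smult u B"
  have Ug: "U0 = fps_of_poly g"
  proof -
    have "fps_of_poly f = fps_of_poly g * fps_of_poly Q0"
      unfolding fAB AQc g_def uc by (simp add: fps_of_poly_mult fps_of_poly_smult algebra_simps)
    then have "U0 * fps_of_poly Q0 = fps_of_poly g * fps_of_poly Q0" using Q0(4) by simp
    moreover have "fps_of_poly Q0 \<noteq> 0" using Q0nz by (simp add: fps_of_poly_eq_iff[of Q0 0, simplified])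
    ultimately show ?thesis by simp
  qed
  have part3: "is_prime_factorization g (smult u (\<Phi> ! 0) # drop (Suc k) \<Phi>)"
    unfolding is_prime_factorization_def
  proof (intro conjI)
    show "smult u (\<Phi> ! 0) # drop (Suc k) \<Phi> \<noteq> []" by simp
    have "[:u:] * \<Phi>0 dvd 1 * 1"
      using uu pf(2) unfolding \<Phi>0_def by (intro mult_dvd_mono) (simp_all add: is_unit_const_poly_iff)
    then show "hd (smult u (\<Phi> ! 0) # drop (Suc k) \<Phi>) dvd 1" using Phi0 by simp
    have dd: "drop (Suc k) \<Phi> = drop k (tl \<Phi>)" by (simp add: drop_Suc)
    show "\<forall>x\<in>set (tl (smult u (\<Phi> ! 0) # drop (Suc k) \<Phi>)). prime_elem x"
      using dropU unfolding dd by auto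
    show "g = prod_list (smult u (\<Phi> ! 0) # drop (Suc k) \<Phi>)"
      unfolding g_def B_def Bt_def Phi0 dd by simp
  qed
  show ?thesis using uu part2 part3 Ug WPU by blast
qed

end
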